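(* Let $f(\alpha,\beta)$ and $h(\alpha)$ be functions with $f(\alpha,\beta)=-f(\beta,\alpha)$ for all $\alpha,\beta$. If for all $\alpha,\beta,\gamma$ $$f(\alpha,\beta)h(\alpha)h(\beta)+f(\beta,\gamma)h(\beta)h(\gamma)+f(\gamma,\alpha)h(\gamma)h(\alpha)=f(\alpha,\beta)f(\beta,\gamma)f(\gamma,\alpha),$$ then for all $\alpha,\beta,\gamma,\delta$ $$f(\alpha,\beta)f(\beta,\gamma)f(\gamma,\alpha)+f(\beta,\alpha)f(\alpha,\delta)f(\delta,\beta)+f(\gamma,\beta)f(\beta,\delta)f(\delta,\gamma)+f(\alpha,\gamma)f(\gamma,\delta)f(\delta,\alpha)=0.$$ Conversely, if the latter four-term identity holds for all $\alpha,\beta,\gamma,\delta$, then the former three-term identity holds with $h(\alpha)=if(\alpha,\delta)$, for any fixed $\delta$. *)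

theory Defs
  imports Complex_Main
begin

end

theory Submission
  imports Defs
begin

theorem theorem2:
  fixes f :: "'a \<Rightarrow> 'a \<Rightarrow> complex" and h :: "'a \<Rightarrow> complex"
  assumes antisym: "\<And>\<alpha> \<beta>. f \<alpha> \<beta> = - f \<beta> \<alpha>"
  shows "((\<forall>\<alpha> \<beta> \<gamma>.
            f \<alpha> \<beta> * h \<alpha> * h \<beta> + f \<beta> \<gamma> * h \<beta> * h \<gamma> + f \<gamma> \<alpha> * h \<gamma> * h \<alpha>
            = f \<alpha> \<beta> * f \<beta> \<gamma> * f \<gamma> \<alpha>)
          \<longrightarrow> (\<forall>\<alpha> \<beta> \<gamma> \<delta>.
            f \<alpha> \<beta> * f \<beta> \<gamma> * f \<gamma> \<alpha> + f \<beta> \<alpha> * f \<alpha> \<delta> * f \<delta> \<beta>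
            + f \<gamma> \<beta> * f \<beta> \<delta> * f \<delta> \<gamma> + f \<alpha> \<gamma> * f \<gamma> \<delta> * f \<delta> \<alpha> = 0))
       \<and> ((\<forall>\<alpha> \<beta> \<gamma> \<delta>.
            f \<alpha> \<beta> * f \<beta> \<gamma> * f \<gamma> \<alpha> + f \<beta> \<alpha> * f \<alpha> \<delta> * f \<delta> \<beta>
            + f \<gamma> \<beta> * f \<beta> \<delta> * f \<delta> \<gamma> + f \<alpha> \<gamma> * f \<gamma> \<delta> * f \<delta> \<alpha> = 0)
          \<longrightarrow> (\<forall>\<delta>. let h' = (\<lambda>\<alpha>. \<i> * f \<alpha> \<delta>) in
               \<forall>\<alpha> \<beta> \<gamma>.
                 f \<alpha> \<beta> * h' \<alpha> * h' \<beta> + f \<beta> \<gamma> * h' \<beta> * h' \<gamma> + f \<gamma> \<alpha> * h' \<gamma> * h' \<alpha>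
                 = f \<alpha> \<beta> * f \<beta> \<gamma> * f \<gamma> \<alpha>))"
proof (intro conjI impI allI)
  fix \<alpha> \<beta> \<gamma> \<delta>
  assume H: "\<forall>\<alpha> \<beta> \<gamma>.
            f \<alpha> \<beta> * h \<alpha> * h \<beta> + f \<beta> \<gamma> * h \<beta> * h \<gamma> + f \<gamma> \<alpha> * h \<gamma> * h \<alpha>
            = f \<alpha> \<beta> * f \<beta> \<gamma> * f \<gamma> \<alpha>"
  have e1: "f \<alpha> \<beta> * h \<alpha> * h \<beta> + f \<beta> \<gamma> * h \<beta> * h \<gamma> + f \<gamma> \<alpha> * h \<gamma> * h \<alpha> = f \<alpha> \<beta> * f \<beta> \<gamma> * f \<gamma> \<alpha>" using H by blast
  have e2: "f \<beta> \<alpha> * h \<beta> * h \<alpha> + f \<alpha> \<delta> * h \<alpha> * h \<delta> + f \<delta> \<beta> * h \<delta> * h \<beta> = f \<beta> \<alpha> * f \<alpha> \<delta> * f \<delta> \<beta>" using H by blast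
  have e3: "f \<gamma> \<beta> * h \<gamma> * h \<beta> + f \<beta> \<delta> * h \<beta> * h \<delta> + f \<delta> \<gamma> * h \<delta> * h \<gamma> = f \<gamma> \<beta> * f \<beta> \<delta> * f \<delta> \<gamma>" using H by blast
  have e4: "f \<alpha> \<gamma> * h \<alpha> * h \<gamma> + f \<gamma> \<delta> * h \<gamma> * h \<delta> + f \<delta> \<alpha> * h \<delta> * h \<alpha> = f \<alpha> \<gamma> * f \<gamma> \<delta> * f \<delta> \<alpha>" using H by blast
  show "f \<alpha> \<beta> * f \<beta> \<gamma> * f \<gamma> \<alpha> + f \<beta> \<alpha> * f \<alpha> \<delta> * f \<delta> \<beta>
            + f \<gamma> \<beta> * f \<beta> \<delta> * f \<delta> \<gamma> + f \<alpha> \<gamma> * f \<gamma> \<delta> * f \<delta> \<alpha> = 0"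
    unfolding e1[symmetric] e2[symmetric] e3[symmetric] e4[symmetric]
    using antisym[of \<beta> \<alpha>] antisym[of \<alpha> \<delta>] antisym[of \<gamma> \<beta>] antisym[of \<beta> \<delta>]
      antisym[of \<delta> \<gamma>] antisym[of \<alpha> \<gamma>] antisym[of \<gamma> \<delta>] antisym[of \<delta> \<alpha>]
    by (simp add: algebra_simps)
next
  fix \<delta>
  assume H: "\<forall>\<alpha> \<beta> \<gamma> \<delta>.
            f \<alpha> \<beta> * f \<beta> \<gamma> * f \<gamma> \<alpha> + f \<beta> \<alpha> * f \<alpha> \<delta> * f \<delta> \<beta>
            + f \<gamma> \<beta> * f \<beta> \<delta> * f \<delta> \<gamma> + f \<alpha> \<gamma> * f \<gamma> \<delta> * f \<delta> \<alpha> = 0"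
  show "let h' = (\<lambda>\<alpha>. \<i> * f \<alpha> \<delta>) in
               \<forall>\<alpha> \<beta> \<gamma>.
                 f \<alpha> \<beta> * h' \<alpha> * h' \<beta> + f \<beta> \<gamma> * h' \<beta> * h' \<gamma> + f \<gamma> \<alpha> * h' \<gamma> * h' \<alpha>
                 = f \<alpha> \<beta> * f \<beta> \<gamma> * f \<gamma> \<alpha>"
    unfolding Let_def
  proof (intro allI)
    fix \<alpha> \<beta> \<gamma>
    have e: "f \<alpha> \<beta> * f \<beta> \<gamma> * f \<gamma> \<alpha> + f \<beta> \<alpha> * f \<alpha> \<delta> * f \<delta> \<beta>
            + f \<gamma> \<beta> * f \<beta> \<delta> * f \<delta> \<gamma> + f \<alpha> \<gamma> * f \<gamma> \<delta> * f \<delta> \<alpha> = 0" using H by blast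
    have ii: "\<i> * \<i> = (-1::complex)" by simp
    show "f \<alpha> \<beta> * (\<i> * f \<alpha> \<delta>) * (\<i> * f \<beta> \<delta>) + f \<beta> \<gamma> * (\<i> * f \<beta> \<delta>) * (\<i> * f \<gamma> \<delta>) + f \<gamma> \<alpha> * (\<i> * f \<gamma> \<delta>) * (\<i> * f \<alpha> \<delta>)
                 = f \<alpha> \<beta> * f \<beta> \<gamma> * f \<gamma> \<alpha>"
    proof -
      have a: "f \<alpha> \<beta> * (\<i> * f \<alpha> \<delta>) * (\<i> * f \<beta> \<delta>) + f \<beta> \<gamma> * (\<i> * f \<beta> \<delta>) * (\<i> * f \<gamma> \<delta>) + f \<gamma> \<alpha> * (\<i> * f \<gamma> \<delta>) * (\<i> * f \<alpha> \<delta>)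
        = - (f \<alpha> \<beta> * f \<alpha> \<delta> * f \<beta> \<delta> + f \<beta> \<gamma> * f \<beta> \<delta> * f \<gamma> \<delta> + f \<gamma> \<alpha> * f \<gamma> \<delta> * f \<alpha> \<delta>)"
        by (simp add: algebra_simps ii)
      have b: "- (f \<alpha> \<beta> * f \<alpha> \<delta> * f \<beta> \<delta> + f \<beta> \<gamma> * f \<beta> \<delta> * f \<gamma> \<delta> + f \<gamma> \<alpha> * f \<gamma> \<delta> * f \<alpha> \<delta>)
          = f \<alpha> \<beta> * f \<beta> \<gamma> * f \<gamma> \<alpha> - (f \<alpha> \<beta> * f \<beta> \<gamma> * f \<gamma> \<alpha> + f \<beta> \<alpha> * f \<alpha> \<delta> * f \<delta> \<beta>
            + f \<gamma> \<beta> * f \<beta> \<delta> * f \<delta> \<gamma> + f \<alpha> \<gamma> * f \<gamma> \<delta> * f \<delta> \<alpha>)"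
        using antisym[of \<beta> \<alpha>] antisym[of \<delta> \<beta>] antisym[of \<gamma> \<beta>] antisym[of \<delta> \<gamma>]
        antisym[of \<alpha> \<gamma>] antisym[of \<delta> \<alpha>]
        by (simp add: algebra_simps)
      show ?thesis unfolding a b e by simp
    qed
  qed
qed

end
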